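(* Let $\mathcal A=(Q,T,\delta,X)$ be an OCAPT with initial state $q_0$ and target set $F\subseteq Q$. If there is a valuation $V$ such that all infinite $V$-runs of $\mathcal A$ from $(q_0,0)$ reach $F$, then there is a valuation $V'$ with $V'(x)=\exp(|\mathcal A|^{\mathcal O(1)})$ (i.e. bounded by $2^{p(|\mathcal A|)}$ for a fixed polynomial $p$) for all $x\in X$, such that all infinite $V'$-runs of $\mathcal A$ from $(q_0,0)$ reach $F$.
   Context: An OCAPT is $\mathcal A=(Q,T,\delta,X)$ with finite state set $Q$, finite parameter set $X$, transitions $T\subseteq Q\times Q$, and $\delta:T\to Op$ where $Op$ consists of updates $+a$ with $a\in\{-1,0,1\}$, the zero test $=0$, and parametric tests $=x$, $\ge x$ ($x\in X$); no parametric updates. A valuation is $V:X\to\mathbb{N}$. A $V$-run is a sequence of configurations $(q_i,c_i)\in Q\times\mathbb{N}$ with $(q_i,q_{i+1})\in T$ such that tests hold ($c_i=0$, $c_i=V(x)$, $c_i\ge V(x)$, with $c_{i+1}=c_i$) and updates are applied ($c_{i+1}=c_i+a$). A run reaches $F$ if some state in it belongs to $F$. *)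

theory Defs
  imports Main
begin

datatype op =
    Upd int        \<comment> \<open>update +a, with a in {-1,0,1} (enforced by wf)\<close>
  | ZeroTest
  | EqTest nat
  | GeTest nat

record ocapt =
  St    :: "nat set"
  Tr    :: "(nat \<times> nat) set"
  Lab   :: "nat \<times> nat \<Rightarrow> op"
  Par   :: "nat set"

definition op_wf :: "nat set \<Rightarrow> op \<Rightarrow> bool" where
  "op_wf X p \<longleftrightarrow> (case p of
      Upd a \<Rightarrow> a \<in> {-1, 0, 1}
    | ZeroTest \<Rightarrow> True
    | EqTest x \<Rightarrow> x \<in> X
    | GeTest x \<Rightarrow> x \<in> X)"

definition ocapt_wf :: "ocapt \<Rightarrow> bool" where
  "ocapt_wf A \<longleftrightarrow> finite (St A) \<and> finite (Par A) \<and> Tr A \<subseteq> St A \<times> St A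
     \<and> (\<forall>t\<in>Tr A. op_wf (Par A) (Lab A t))"

text \<open>Size of the automaton: number of states + transitions + parameters
  (each operation has constant size).\<close>
definition ocapt_size :: "ocapt \<Rightarrow> nat" where
  "ocapt_size A = card (St A) + card (Tr A) + card (Par A)"

definition step :: "ocapt \<Rightarrow> (nat \<Rightarrow> nat) \<Rightarrow> nat \<times> nat \<Rightarrow> nat \<times> nat \<Rightarrow> bool" where
  "step A V cf cf' \<longleftrightarrow> (let (q, c) = cf; (q', c') = cf' in
     (q, q') \<in> Tr A \<and>
     (case Lab A (q, q') of
        Upd a \<Rightarrow> int c' = int c + a
      | ZeroTest \<Rightarrow> c = 0 \<and> c' = c
      | EqTest x \<Rightarrow> c = V x \<and> c' = c
      | GeTest x \<Rightarrow> c \<ge> V x \<and> c' = c))"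

definition inf_run :: "ocapt \<Rightarrow> (nat \<Rightarrow> nat) \<Rightarrow> nat \<times> nat \<Rightarrow> (nat \<Rightarrow> nat \<times> nat) \<Rightarrow> bool" where
  "inf_run A V cf0 \<rho> \<longleftrightarrow> \<rho> 0 = cf0 \<and> (\<forall>i. step A V (\<rho> i) (\<rho> (Suc i)))"

definition reaches :: "nat set \<Rightarrow> (nat \<Rightarrow> nat \<times> nat) \<Rightarrow> bool" where
  "reaches F \<rho> \<longleftrightarrow> (\<exists>i. fst (\<rho> i) \<in> F)"

definition all_inf_runs_reach ::
  "ocapt \<Rightarrow> (nat \<Rightarrow> nat) \<Rightarrow> nat \<Rightarrow> nat set \<Rightarrow> bool" where
  "all_inf_runs_reach A V q0 F \<longleftrightarrow> (\<forall>\<rho>. inf_run A V (q0, 0) \<rho> \<longrightarrow> reaches F \<rho>)"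

end

theory Submission
  imports Defs
begin

definition runL :: "ocapt \<Rightarrow> (nat \<Rightarrow> nat) \<Rightarrow> nat set \<Rightarrow> (nat \<Rightarrow> nat \<times> nat) \<Rightarrow> nat \<Rightarrow> bool" where
  "runL A V F \<rho> L \<longleftrightarrow> (\<forall>t<L. step A V (\<rho> t) (\<rho> (Suc t))) \<and> (\<forall>t\<le>L. fst (\<rho> t) \<notin> F)"

lemma stepD:
  assumes "ocapt_wf A" "step A V (q,c) (q',c')"
  shows "(q,q') \<in> Tr A \<and> (int c' = int c - 1 \<or> c' = c \<or> int c' = int c + 1)"
  using assms unfolding ocapt_wf_def step_def op_wf_def
  by (auto split: op.splits)

lemma step_transfer:
  assumes "ocapt_wf A" "step A V1 (q,c) (q',c')"
    "int c2' - int c2 = int c' - int c" "c = 0 \<longleftrightarrow> c2 = 0"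
    "\<forall>x\<in>Par A. (c = V1 x \<longleftrightarrow> c2 = V2 x) \<and> (V1 x \<le> c \<longleftrightarrow> V2 x \<le> c2)"
  shows "step A V2 (q,c2) (q',c2')"
proof -
  have tr: "(q,q') \<in> Tr A" using assms(2) by (simp add: step_def)
  then have ow: "op_wf (Par A) (Lab A (q,q'))" using assms(1) by (auto simp: ocapt_wf_def)
  show ?thesis using assms(2-5) tr ow unfolding step_def op_wf_def
    by (auto split: op.splits)
qed

definition sh :: "(nat \<Rightarrow> nat \<times> nat) \<Rightarrow> int \<Rightarrow> nat \<Rightarrow> nat \<times> nat" where
  "sh \<rho> z t = (fst (\<rho> t), nat (int (snd (\<rho> t)) + z))"

lemma pump:
  fixes \<rho> :: "nat \<Rightarrow> nat \<times> nat" and Stp :: "nat \<times> nat \<Rightarrow> nat \<times> nat \<Rightarrow> bool"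
  assumes ij: "i < j" "j \<le> e" and st: "fst (\<rho> i) = fst (\<rho> j)"
    and dl: "\<delta> = int (snd (\<rho> j)) - int (snd (\<rho> i))"
    and H1: "\<forall>t<i. Stp (sh \<rho> S0 t) (sh \<rho> S0 (Suc t))"
    and H2: "\<forall>t k. i \<le> t \<longrightarrow> t < j \<longrightarrow> k \<le> m \<longrightarrow>
               Stp (sh \<rho> (S0 + int k * \<delta>) t) (sh \<rho> (S0 + int k * \<delta>) (Suc t))"
    and H3: "\<forall>t. j \<le> t \<longrightarrow> t < e \<longrightarrow> Stp (sh \<rho> (S0 + int m * \<delta>) t) (sh \<rho> (S0 + int m * \<delta>) (Suc t))"
  shows "\<exists>\<sigma>. \<sigma> 0 = sh \<rho> S0 0 \<and> \<sigma> (e + m * (j - i)) = sh \<rho> (S0 + int m * \<delta>) e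
     \<and> (\<forall>t < e + m * (j - i). Stp (\<sigma> t) (\<sigma> (Suc t)))
     \<and> (\<forall>t \<le> e + m * (j - i). \<exists>t'\<le>e. fst (\<sigma> t) = fst (\<rho> t'))"
proof -
  define P where "P = j - i"
  have P0: "P > 0" using ij by (simp add: P_def)
  define h where "h t = (if t < j + m * P then (if t < i then t else i + (t - i) mod P) else t - m * P)" for t
  define s where "s t = (if t < j + m * P then (if t < i then S0 else S0 + int ((t - i) div P) * \<delta>) else S0 + int m * \<delta>)" for t
  define \<sigma> where "\<sigma> t = sh \<rho> (s t) (h t)" for t
  have hle: "h t \<le> e" if "t \<le> e + m * P" for t
  proof -
    have "(t - i) mod P < P" using P0 by simp
    then have "i + (t - i) mod P \<le> e" using ij unfolding P_def by linarith
    then show ?thesis using that ij unfolding h_def by auto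
  qed
  have steps: "Stp (\<sigma> t) (\<sigma> (Suc t))" if t: "t < e + m * P" for t
  proof -
    consider (a) "Suc t < i" | (b) "Suc t = i" | (c) "i \<le> t" "Suc t < j + m * P"
      | (d) "Suc t = j + m * P" | (e) "j + m * P \<le> t" using ij by linarith
    then show ?thesis
    proof cases
      case a then show ?thesis using H1 ij by (simp add: \<sigma>_def h_def s_def)
    next
      case b
      have "Stp (sh \<rho> S0 t) (sh \<rho> S0 (Suc t))" using H1 b by (metis lessI)
      then show ?thesis using b ij by (simp add: \<sigma>_def h_def s_def)
    next
      case c
      define u where "u = t - i"
      have k: "u div P \<le> m"
      proof -
        have "u < (m+1) * P" using c ij unfolding u_def P_def by (simp add: algebra_simps)
        then have "u div P < m + 1" using P0 by (simp add: div_less_iff_less_mult)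
        then show ?thesis by simp
      qed
      have um: "u mod P < P" using P0 by simp
      have ht: "h t = i + u mod P" "s t = S0 + int (u div P) * \<delta>"
        using c ij by (auto simp: h_def s_def u_def)
      have ht1: "h (Suc t) = i + (Suc u) mod P" "s (Suc t) = S0 + int (Suc u div P) * \<delta>"
        using c ij by (auto simp: h_def s_def u_def Suc_diff_le)
      have S: "Stp (sh \<rho> (s t) (h t)) (sh \<rho> (s t) (Suc (h t)))"
      proof -
        have "i + u mod P < j" using um ij unfolding P_def by linarith
        then show ?thesis using H2 k ht by auto
      qed
      show ?thesis
      proof (cases "Suc (u mod P) = P")
        case True
        then have "Suc u mod P = 0" "Suc u div P = Suc (u div P)"
          using P0 by (metis mod_Suc div_Suc, metis div_Suc mod_Suc)
        moreover have "Suc (h t) = j" using True ht unfolding P_def using ij by simp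
        ultimately have "\<sigma> (Suc t) = sh \<rho> (s t) (Suc (h t))"
          using ht ht1 st dl by (simp add: \<sigma>_def sh_def algebra_simps)
        then show ?thesis using S by (simp add: \<sigma>_def)
      next
        case False
        then have "Suc u mod P = Suc (u mod P)" "Suc u div P = u div P"
          using P0 by (simp_all add: mod_Suc div_Suc)
        then show ?thesis using S ht ht1 by (simp add: \<sigma>_def)
      qed
    next
      case d
      then have tt: "t - i = (P - 1) + m * P" using ij unfolding P_def by simp
      obtain P' where P': "P = Suc P'" using P0 by (cases P) auto
      have tt': "t - i = P' + Suc P' * m" using tt P' by simp
      have "(t - i) mod P = P - 1" "(t - i) div P = m" unfolding tt' P'
        by (subst mod_mult_self2, simp, subst div_mult_self2, simp_all)
      then have ht: "h t = j - 1" "s t = S0 + int m * \<delta>" "h (Suc t) = j" "s (Suc t) = S0 + int m * \<delta>"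
        using d ij P0 unfolding h_def s_def P_def by auto
      have "Stp (sh \<rho> (s t) (h t)) (sh \<rho> (s t) (Suc (h t)))"
      proof -
        have "i \<le> j - 1" "j - 1 < j" using ij by auto
        then have "Stp (sh \<rho> (S0 + int m * \<delta>) (j - 1)) (sh \<rho> (S0 + int m * \<delta>) (Suc (j - 1)))"
          using H2 by blast
        then show ?thesis using ht by simp
      qed
      then show ?thesis using ht ij by (simp add: \<sigma>_def)
    next
      case e
      then have "h t = t - m * P" "h (Suc t) = Suc (t - m * P)" "s t = S0 + int m * \<delta>" "s (Suc t) = S0 + int m * \<delta>"
        by (auto simp: h_def s_def)
      then show ?thesis using H3 e t by (simp add: \<sigma>_def)
    qed
  qed
  have s0: "\<sigma> 0 = sh \<rho> S0 0"
    using ij by (cases "i = 0") (auto simp: \<sigma>_def h_def s_def)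
  have se: "\<sigma> (e + m * P) = sh \<rho> (S0 + int m * \<delta>) e"
    using ij by (auto simp: \<sigma>_def h_def s_def)
  have states: "\<exists>t'\<le>e. fst (\<sigma> t) = fst (\<rho> t')" if "t \<le> e + m * P" for t
    using hle[OF that] by (auto simp: \<sigma>_def sh_def)
  show ?thesis using s0 se steps states unfolding P_def by blast
qed

lemma stepD':
  assumes "ocapt_wf A" "step A V cf cf'"
  shows "(fst cf, fst cf') \<in> Tr A \<and> \<bar>int (snd cf') - int (snd cf)\<bar> \<le> 1"
proof -
  obtain q c q' c' where "cf = (q,c)" "cf' = (q',c')" by (cases cf, cases cf')
  then show ?thesis using stepD[of A V q c q' c'] assms by auto
qed

lemma ivt_up:
  fixes c :: "nat \<Rightarrow> nat"
  assumes "\<forall>t<T. \<bar>int (c (Suc t)) - int (c t)\<bar> \<le> 1" "c 0 \<le> l" "l \<le> c T"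
  shows "\<exists>t\<le>T. c t = l"
  using assms
proof (induction T)
  case 0 then show ?case by auto
next
  case (Suc T)
  show ?case
  proof (cases "l \<le> c T")
    case True then show ?thesis using Suc by (metis le_SucI less_SucI)
  next
    case False
    then have "c (Suc T) = l" using Suc.prems(1,3) by force
    then show ?thesis by blast
  qed
qed

lemma ivt_down:
  fixes c :: "nat \<Rightarrow> nat"
  assumes "\<forall>t<T. \<bar>int (c (Suc t)) - int (c t)\<bar> \<le> 1" "l \<le> c 0" "c T \<le> l"
  shows "\<exists>t\<le>T. c t = l"
  using assms
proof (induction T)
  case 0 then show ?case by auto
next
  case (Suc T)
  show ?case
  proof (cases "c T \<le> l")
    case True then show ?thesis using Suc by (metis le_SucI less_SucI)
  next
    case False
    then have "c (Suc T) = l" using Suc.prems(1,3) by force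
    then show ?thesis by blast
  qed
qed

lemma runL_prefix: "runL A V F \<rho> L \<Longrightarrow> e \<le> L \<Longrightarrow> runL A V F \<rho> e"
  unfolding runL_def by auto

lemma runL_suffix: "runL A V F \<rho> L \<Longrightarrow> e \<le> L \<Longrightarrow> runL A V F (\<lambda>t. \<rho> (t + e)) (L - e)"
  unfolding runL_def by auto

lemma runL_concat:
  assumes "runL A V F \<sigma>1 e1" "runL A V F \<sigma>2 L2" "\<sigma>1 e1 = \<sigma>2 0"
  shows "runL A V F (\<lambda>t. if t \<le> e1 then \<sigma>1 t else \<sigma>2 (t - e1)) (e1 + L2)"
  unfolding runL_def
proof (intro conjI allI impI)
  fix t assume t: "t < e1 + L2"
  consider "t < e1" | "t = e1" | "e1 < t" by linarith
  then show "step A V (if t \<le> e1 then \<sigma>1 t else \<sigma>2 (t - e1))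
            (if Suc t \<le> e1 then \<sigma>1 (Suc t) else \<sigma>2 (Suc t - e1))"
  proof cases
    case 1 then show ?thesis using assms(1) unfolding runL_def by auto
  next
    case 2 then show ?thesis using assms(2,3) t unfolding runL_def by auto
  next
    case 3
    then have "t - e1 < L2" "Suc t - e1 = Suc (t - e1)" using t by auto
    then show ?thesis using assms(2) 3 unfolding runL_def by auto
  qed
next
  fix t assume t: "t \<le> e1 + L2"
  show "fst (if t \<le> e1 then \<sigma>1 t else \<sigma>2 (t - e1)) \<notin> F"
    using assms(1,2) t unfolding runL_def by auto
qed

locale gap =
  fixes A :: ocapt and V' V :: "nat \<Rightarrow> nat" and a b D :: nat and F :: "nat set"
  assumes wf: "ocapt_wf A" and big: "a + card (St A) + 2 \<le> b"
    and nomark: "\<forall>x\<in>Par A. V' x \<le> a \<or> b \<le> V' x"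
    and Vdef: "\<forall>x\<in>Par A. V x = (if b \<le> V' x then V' x + D else V' x)"
    and Ddvd: "\<forall>d. 1 \<le> d \<and> d \<le> card (St A) \<longrightarrow> d dvd D"
begin

definition TRok :: "nat \<Rightarrow> int \<Rightarrow> bool" where
  "TRok c z \<longleftrightarrow> (a < c \<and> c < b \<and> 0 \<le> z \<and> z \<le> int D) \<or> (c \<le> a \<and> z = 0) \<or> (b \<le> c \<and> z = int D)"

lemma TR:
  assumes st: "step A V' (\<rho> t) (\<rho> (Suc t))" and ok: "TRok (snd (\<rho> t)) z"
  shows "step A V (sh \<rho> z t) (sh \<rho> z (Suc t))"
proof -
  obtain q c where qc: "\<rho> t = (q,c)" by (cases "\<rho> t")
  obtain q' c' where qc': "\<rho> (Suc t) = (q',c')" by (cases "\<rho> (Suc t)")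
  have st': "step A V' (q,c) (q',c')" using st qc qc' by simp
  have sl: "\<bar>int c' - int c\<bar> \<le> 1" using stepD'[OF wf st] qc qc' by simp
  have nn: "int c + z \<ge> 0" "int c' + z \<ge> 0" using ok sl big unfolding TRok_def qc by auto
  have "step A V (q, nat (int c + z)) (q', nat (int c' + z))"
  proof (rule step_transfer[OF wf st'])
    show "int (nat (int c' + z)) - int (nat (int c + z)) = int c' - int c" using nn by simp
    show "(c = 0) = (nat (int c + z) = 0)" using ok big nn unfolding TRok_def qc by auto
    show "\<forall>x\<in>Par A. (c = V' x) = (nat (int c + z) = V x) \<and> (V' x \<le> c) = (V x \<le> nat (int c + z))"
    proof
      fix x assume x: "x \<in> Par A"
      show "(c = V' x) = (nat (int c + z) = V x) \<and> (V' x \<le> c) = (V x \<le> nat (int c + z))"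
        using nomark[rule_format, OF x] Vdef[rule_format, OF x] ok nn big unfolding TRok_def qc
        by auto
    qed
  qed
  then show ?thesis using qc qc' by (simp add: sh_def)
qed

lemma CONSTrun:
  assumes "runL A V' F \<rho> e" "\<forall>t<e. TRok (snd (\<rho> t)) z"
  shows "runL A V F (sh \<rho> z) e"
  using assms TR unfolding runL_def by (auto simp: sh_def)

definition fm :: "nat \<Rightarrow> nat" where "fm c = (if b \<le> c then c + D else c)"

lemma slope: "runL A V' F \<rho> e \<Longrightarrow> \<forall>t<e. \<bar>int (snd (\<rho> (Suc t))) - int (snd (\<rho> t))\<bar> \<le> 1"
  using stepD'[OF wf] unfolding runL_def by blast

lemma inSt: "runL A V' F \<rho> e \<Longrightarrow> 0 < t \<Longrightarrow> t \<le> e \<Longrightarrow> fst (\<rho> t) \<in> St A"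
proof -
  assume r: "runL A V' F \<rho> e" and t: "0 < t" "t \<le> e"
  have "t - 1 < e" "Suc (t - 1) = t" using t by auto
  then have "step A V' (\<rho> (t - 1)) (\<rho> (Suc (t - 1)))" using r unfolding runL_def by blast
  then have "(fst (\<rho> (t - 1)), fst (\<rho> t)) \<in> Tr A" using stepD'[OF wf] t by auto
  then show ?thesis using wf unfolding ocapt_wf_def by auto
qed

lemma seg_up:
  assumes r: "runL A V' F \<rho> e" and c0: "snd (\<rho> 0) \<le> a" and ce: "b \<le> snd (\<rho> e)"
    and inter: "\<forall>t. 0 < t \<and> t < e \<longrightarrow> a < snd (\<rho> t) \<and> snd (\<rho> t) < b"
  shows "\<exists>\<sigma> e1. e \<le> e1 \<and> \<sigma> 0 = (fst (\<rho> 0), fm (snd (\<rho> 0))) \<and> \<sigma> e1 = (fst (\<rho> e), fm (snd (\<rho> e)))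
     \<and> runL A V F \<sigma> e1"
proof -
  define n where "n = card (St A)"
  define c where "c t = snd (\<rho> t)" for t
  have sl: "\<forall>t<e. \<bar>int (c (Suc t)) - int (c t)\<bar> \<le> 1" using slope[OF r] by (simp add: c_def)
  define \<phi> where "\<phi> l = (LEAST t. c t = l)" for l
  define L where "L = {a+1..a+n+1}"
  have ex: "\<exists>t\<le>e. c t = l" if "l \<in> L" for l
  proof -
    have "c 0 \<le> l" "l \<le> c e" using that c0 ce big unfolding L_def c_def n_def by auto
    then show ?thesis using ivt_up[OF sl] by blast
  qed
  have phi: "c (\<phi> l) = l" "\<phi> l \<le> e" if lL: "l \<in> L" for l
  proof -
    obtain t where t: "t \<le> e" "c t = l" using ex[OF lL] by blast
    show "c (\<phi> l) = l" unfolding \<phi>_def by (rule LeastI[of _ t]) (rule t(2))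
    have "\<phi> l \<le> t" unfolding \<phi>_def by (rule Least_le) (rule t(2))
    then show "\<phi> l \<le> e" using t(1) by simp
  qed
  have phi_pos: "0 < \<phi> l" "\<phi> l < e" if "l \<in> L" for l
  proof -
    have p: "c (\<phi> l) = l" "\<phi> l \<le> e" using phi[OF that] by auto
    show "0 < \<phi> l" using p c0 that unfolding L_def c_def by (cases "\<phi> l") auto
    have "\<phi> l \<noteq> e" using p ce that big unfolding L_def c_def n_def by auto
    then show "\<phi> l < e" using p by simp
  qed
  have mono: "\<phi> l < \<phi> l'" if "l \<in> L" "l' \<in> L" "l < l'" for l l'
  proof -
    have "\<forall>t<\<phi> l'. \<bar>int (c (Suc t)) - int (c t)\<bar> \<le> 1" using sl phi(2)[OF that(2)] by auto
    moreover have "c 0 \<le> l" "l \<le> c (\<phi> l')"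
      using phi(1)[OF that(2)] c0 that unfolding L_def c_def by auto
    ultimately obtain t where t: "t \<le> \<phi> l'" "c t = l"
      using ivt_up[of "\<phi> l'" c l] by blast
    then have "\<phi> l \<le> t" unfolding \<phi>_def by (metis Least_le)
    then have "\<phi> l \<le> \<phi> l'" using t(1) by simp
    moreover have "\<phi> l \<noteq> \<phi> l'" using phi(1)[OF that(1)] phi(1)[OF that(2)] that(3) by auto
    ultimately show ?thesis by simp
  qed
  have "\<not> inj_on (\<lambda>l. fst (\<rho> (\<phi> l))) L"
  proof
    assume inj: "inj_on (\<lambda>l. fst (\<rho> (\<phi> l))) L"
    have "(\<lambda>l. fst (\<rho> (\<phi> l))) ` L \<subseteq> St A" 
    proof (rule image_subsetI)
      fix l assume "l \<in> L"
      then show "fst (\<rho> (\<phi> l)) \<in> St A" using inSt[OF r] phi_pos[of l] by simp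
    qed
    moreover have "finite (St A)" using wf unfolding ocapt_wf_def by auto
    ultimately have "card L \<le> card (St A)" using card_inj_on_le[OF inj] by blast
    then show False unfolding L_def n_def by simp
  qed
  then obtain l1 l2 where l12: "l1 \<in> L" "l2 \<in> L" "l1 < l2" "fst (\<rho> (\<phi> l1)) = fst (\<rho> (\<phi> l2))"
  proof -
    obtain x y where xy: "x \<in> L" "y \<in> L" "x \<noteq> y" "fst (\<rho> (\<phi> x)) = fst (\<rho> (\<phi> y))"
      using \<open>\<not> inj_on _ L\<close> unfolding inj_on_def by blast
    show ?thesis
    proof (cases "x < y")
      case True then show ?thesis using that xy by blast
    next
      case False then have "y < x" using xy(3) by simp
      then show ?thesis using that xy by metis
    qed
  qed
  define i where "i = \<phi> l1"
  define j where "j = \<phi> l2"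
  define d where "d = l2 - l1"
  have d: "1 \<le> d" "d \<le> n" using l12 unfolding d_def L_def by auto
  have dD: "d dvd D" using Ddvd d unfolding n_def by auto
  define m where "m = D div d"
  have md: "m * d = D" using dD unfolding m_def by simp
  have ij: "i < j" "j \<le> e" "0 < i"
    using mono[OF l12(1-3)] phi(2)[OF l12(2)] phi_pos(1)[OF l12(1)] unfolding i_def j_def by auto
  have dl: "int d = int (snd (\<rho> j)) - int (snd (\<rho> i))"
    using phi(1)[OF l12(1)] phi(1)[OF l12(2)] l12(3) unfolding i_def j_def d_def c_def by simp
  have stp: "step A V' (\<rho> t) (\<rho> (Suc t))" if "t < e" for t using r that unfolding runL_def by auto
  have intr: "a < snd (\<rho> t) \<and> snd (\<rho> t) < b" if "0 < t" "t < e" for t using inter that by auto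
  have H1: "\<forall>t<i. step A V (sh \<rho> 0 t) (sh \<rho> 0 (Suc t))"
  proof (intro allI impI)
    fix t assume t: "t < i"
    have "TRok (snd (\<rho> t)) 0" using c0 intr[of t] t ij unfolding TRok_def by (cases "t = 0") auto
    moreover have "t < e" using t ij by simp
    ultimately show "step A V (sh \<rho> 0 t) (sh \<rho> 0 (Suc t))" using TR[of \<rho> t] stp[of t] by simp
  qed
  have H2: "\<forall>t k. i \<le> t \<longrightarrow> t < j \<longrightarrow> k \<le> m \<longrightarrow>
               step A V (sh \<rho> (0 + int k * int d) t) (sh \<rho> (0 + int k * int d) (Suc t))"
  proof (intro allI impI)
    fix t k assume t: "i \<le> t" "t < j" "k \<le> m"
    have "k * d \<le> D" using t(3) md by (metis mult_le_mono1)
    then have "int k * int d \<le> int D" by (metis of_nat_le_iff of_nat_mult)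
    then have "TRok (snd (\<rho> t)) (int k * int d)" using intr[of t] t ij unfolding TRok_def by auto
    moreover have "t < e" using t ij by simp
    ultimately show "step A V (sh \<rho> (0 + int k * int d) t) (sh \<rho> (0 + int k * int d) (Suc t))"
      using TR[of \<rho> t] stp[of t] by simp
  qed
  have H3: "\<forall>t. j \<le> t \<longrightarrow> t < e \<longrightarrow> step A V (sh \<rho> (0 + int m * int d) t) (sh \<rho> (0 + int m * int d) (Suc t))"
  proof (intro allI impI)
    fix t assume t: "j \<le> t" "t < e"
    have "int m * int d = int D" using md by (metis of_nat_mult)
    then have "TRok (snd (\<rho> t)) (int m * int d)" using intr[of t] t ij unfolding TRok_def by auto
    moreover have "t < e" using t ij by simp
    ultimately show "step A V (sh \<rho> (0 + int m * int d) t) (sh \<rho> (0 + int m * int d) (Suc t))"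
      using TR[of \<rho> t] stp[of t] by simp
  qed
  obtain \<sigma> where \<sigma>: "\<sigma> 0 = sh \<rho> 0 0" "\<sigma> (e + m * (j - i)) = sh \<rho> (0 + int m * int d) e"
     "\<forall>t < e + m * (j - i). step A V (\<sigma> t) (\<sigma> (Suc t))"
     "\<forall>t \<le> e + m * (j - i). \<exists>t'\<le>e. fst (\<sigma> t) = fst (\<rho> t')"
    using pump[OF ij(1,2) _ dl H1 H2 H3] l12 unfolding i_def j_def by blast
  have "int m * int d = int D" using md by (metis of_nat_mult)
  then have "\<sigma> 0 = (fst (\<rho> 0), fm (snd (\<rho> 0)))" "\<sigma> (e + m * (j - i)) = (fst (\<rho> e), fm (snd (\<rho> e)))"
    using \<sigma>(1,2) c0 ce big unfolding sh_def fm_def by auto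
  moreover have "runL A V F \<sigma> (e + m * (j - i))"
  proof -
    have "fst (\<sigma> t) \<notin> F" if "t \<le> e + m * (j - i)" for t
      using \<sigma>(4) that r unfolding runL_def by fastforce
    then show ?thesis using \<sigma>(3) unfolding runL_def by blast
  qed
  ultimately show ?thesis by (intro exI[of _ \<sigma>] exI[of _ "e + m * (j - i)"]) auto
qed

lemma seg_down:
  assumes r: "runL A V' F \<rho> e" and c0: "b \<le> snd (\<rho> 0)" and ce: "snd (\<rho> e) \<le> a"
    and inter: "\<forall>t. 0 < t \<and> t < e \<longrightarrow> a < snd (\<rho> t) \<and> snd (\<rho> t) < b"
  shows "\<exists>\<sigma> e1. e \<le> e1 \<and> \<sigma> 0 = (fst (\<rho> 0), fm (snd (\<rho> 0))) \<and> \<sigma> e1 = (fst (\<rho> e), fm (snd (\<rho> e)))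
     \<and> runL A V F \<sigma> e1"
proof -
  define n where "n = card (St A)"
  define c where "c t = snd (\<rho> t)" for t
  have sl: "\<forall>t<e. \<bar>int (c (Suc t)) - int (c t)\<bar> \<le> 1" using slope[OF r] by (simp add: c_def)
  define \<phi> where "\<phi> l = (LEAST t. c t = l)" for l
  define L where "L = {b-n-1..b-1}"
  have ex: "\<exists>t\<le>e. c t = l" if "l \<in> L" for l
  proof -
    have "l \<le> c 0" "c e \<le> l" using that c0 ce big unfolding L_def c_def n_def by auto
    then show ?thesis using ivt_down[OF sl] by blast
  qed
  have phi: "c (\<phi> l) = l" "\<phi> l \<le> e" if lL: "l \<in> L" for l
  proof -
    obtain t where t: "t \<le> e" "c t = l" using ex[OF lL] by blast
    show "c (\<phi> l) = l" unfolding \<phi>_def by (rule LeastI[of _ t]) (rule t(2))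
    have "\<phi> l \<le> t" unfolding \<phi>_def by (rule Least_le) (rule t(2))
    then show "\<phi> l \<le> e" using t(1) by simp
  qed
  have phi_pos: "0 < \<phi> l" "\<phi> l < e" if "l \<in> L" for l
  proof -
    have p: "c (\<phi> l) = l" "\<phi> l \<le> e" using phi[OF that] by auto
    show "0 < \<phi> l" using p c0 that big unfolding L_def c_def by (cases "\<phi> l") auto
    have "\<phi> l \<noteq> e" using p ce that big unfolding L_def c_def n_def by auto
    then show "\<phi> l < e" using p by simp
  qed
  have mono: "\<phi> l < \<phi> l'" if "l \<in> L" "l' \<in> L" "l' < l" for l l'
  proof -
    have "\<forall>t<\<phi> l'. \<bar>int (c (Suc t)) - int (c t)\<bar> \<le> 1" using sl phi(2)[OF that(2)] by auto
    moreover have "l \<le> c 0" "c (\<phi> l') \<le> l"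
      using phi(1)[OF that(2)] c0 that unfolding L_def c_def by (auto simp del: One_nat_def)
    ultimately obtain t where t: "t \<le> \<phi> l'" "c t = l"
      using ivt_down[of "\<phi> l'" c l] by blast
    then have "\<phi> l \<le> t" unfolding \<phi>_def by (metis Least_le)
    then have "\<phi> l \<le> \<phi> l'" using t(1) by simp
    moreover have "\<phi> l \<noteq> \<phi> l'" using phi(1)[OF that(1)] phi(1)[OF that(2)] that(3) by auto
    ultimately show ?thesis by simp
  qed
  have "\<not> inj_on (\<lambda>l. fst (\<rho> (\<phi> l))) L"
  proof
    assume inj: "inj_on (\<lambda>l. fst (\<rho> (\<phi> l))) L"
    have "(\<lambda>l. fst (\<rho> (\<phi> l))) ` L \<subseteq> St A" 
    proof (rule image_subsetI)
      fix l assume "l \<in> L"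
      then show "fst (\<rho> (\<phi> l)) \<in> St A" using inSt[OF r] phi_pos[of l] by simp
    qed
    moreover have "finite (St A)" using wf unfolding ocapt_wf_def by auto
    ultimately have "card L \<le> card (St A)" using card_inj_on_le[OF inj] by blast
    then show False using big unfolding L_def n_def by (simp only: card_atLeastAtMost)
  qed
  then obtain l1 l2 where l12: "l1 \<in> L" "l2 \<in> L" "l2 < l1" "fst (\<rho> (\<phi> l1)) = fst (\<rho> (\<phi> l2))"
  proof -
    obtain x y where xy: "x \<in> L" "y \<in> L" "x \<noteq> y" "fst (\<rho> (\<phi> x)) = fst (\<rho> (\<phi> y))"
      using \<open>\<not> inj_on _ L\<close> unfolding inj_on_def by blast
    show ?thesis
    proof (cases "x < y")
      case True then show ?thesis using that[of y x] xy by simp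
    next
      case False then have "y < x" using xy(3) by simp
      then show ?thesis using that[of x y] xy by simp
    qed
  qed
  define i where "i = \<phi> l1"
  define j where "j = \<phi> l2"
  define d where "d = l1 - l2"
  have d: "1 \<le> d" "d \<le> n" using l12 unfolding d_def L_def by auto
  have dD: "d dvd D" using Ddvd d unfolding n_def by auto
  define m where "m = D div d"
  have md: "m * d = D" using dD unfolding m_def by simp
  have ij: "i < j" "j \<le> e" "0 < i"
    using mono[OF l12(1-3)] phi(2)[OF l12(2)] phi_pos(1)[OF l12(1)] unfolding i_def j_def by auto
  have dl: "- int d = int (snd (\<rho> j)) - int (snd (\<rho> i))"
    using phi(1)[OF l12(1)] phi(1)[OF l12(2)] l12(3) unfolding i_def j_def d_def c_def by simp
  have stp: "step A V' (\<rho> t) (\<rho> (Suc t))" if "t < e" for t using r that unfolding runL_def by auto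
  have intr: "a < snd (\<rho> t) \<and> snd (\<rho> t) < b" if "0 < t" "t < e" for t using inter that by auto
  have H1: "\<forall>t<i. step A V (sh \<rho> (int D) t) (sh \<rho> (int D) (Suc t))"
  proof (intro allI impI)
    fix t assume t: "t < i"
    have "TRok (snd (\<rho> t)) (int D)" using c0 intr[of t] t ij unfolding TRok_def by (cases "t = 0") auto
    moreover have "t < e" using t ij by simp
    ultimately show "step A V (sh \<rho> (int D) t) (sh \<rho> (int D) (Suc t))" using TR[of \<rho> t] stp[of t] by simp
  qed
  have H2: "\<forall>t k. i \<le> t \<longrightarrow> t < j \<longrightarrow> k \<le> m \<longrightarrow>
               step A V (sh \<rho> (int D + int k * (- int d)) t) (sh \<rho> (int D + int k * (- int d)) (Suc t))"
  proof (intro allI impI)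
    fix t k assume t: "i \<le> t" "t < j" "k \<le> m"
    have "k * d \<le> D" using t(3) md by (metis mult_le_mono1)
    then have "int k * int d \<le> int D" by (metis of_nat_le_iff of_nat_mult)
    then have "TRok (snd (\<rho> t)) (int D + int k * (- int d))" using intr[of t] t ij unfolding TRok_def by auto
    moreover have "t < e" using t ij by simp
    ultimately show "step A V (sh \<rho> (int D + int k * (- int d)) t) (sh \<rho> (int D + int k * (- int d)) (Suc t))"
      using TR[of \<rho> t] stp[of t] by simp
  qed
  have H3: "\<forall>t. j \<le> t \<longrightarrow> t < e \<longrightarrow> step A V (sh \<rho> (int D + int m * (- int d)) t) (sh \<rho> (int D + int m * (- int d)) (Suc t))"
  proof (intro allI impI)
    fix t assume t: "j \<le> t" "t < e"
    have "int m * int d = int D" using md by (metis of_nat_mult)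
    then have "TRok (snd (\<rho> t)) (int D + int m * (- int d))" using intr[of t] t ij unfolding TRok_def by auto
    moreover have "t < e" using t ij by simp
    ultimately show "step A V (sh \<rho> (int D + int m * (- int d)) t) (sh \<rho> (int D + int m * (- int d)) (Suc t))"
      using TR[of \<rho> t] stp[of t] by simp
  qed
  obtain \<sigma> where \<sigma>: "\<sigma> 0 = sh \<rho> (int D) 0" "\<sigma> (e + m * (j - i)) = sh \<rho> (int D + int m * (- int d)) e"
     "\<forall>t < e + m * (j - i). step A V (\<sigma> t) (\<sigma> (Suc t))"
     "\<forall>t \<le> e + m * (j - i). \<exists>t'\<le>e. fst (\<sigma> t) = fst (\<rho> t')"
    using pump[OF ij(1,2) _ dl H1 H2 H3] l12 unfolding i_def j_def by blast
  have "int m * int d = int D" using md by (metis of_nat_mult)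
  then have "\<sigma> 0 = (fst (\<rho> 0), fm (snd (\<rho> 0)))" "\<sigma> (e + m * (j - i)) = (fst (\<rho> e), fm (snd (\<rho> e)))"
    using \<sigma>(1,2) c0 ce big unfolding sh_def fm_def by auto
  moreover have "runL A V F \<sigma> (e + m * (j - i))"
  proof -
    have "fst (\<sigma> t) \<notin> F" if "t \<le> e + m * (j - i)" for t
      using \<sigma>(4) that r unfolding runL_def by fastforce
    then show ?thesis using \<sigma>(3) unfolding runL_def by blast
  qed
  ultimately show ?thesis by (intro exI[of _ \<sigma>] exI[of _ "e + m * (j - i)"]) auto
qed

lemma seg:
  assumes r: "runL A V' F \<rho> e" and e0: "0 < e"
    and c0: "snd (\<rho> 0) \<le> a \<or> b \<le> snd (\<rho> 0)" and ce: "snd (\<rho> e) \<le> a \<or> b \<le> snd (\<rho> e)"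
    and inter: "\<forall>t. 0 < t \<and> t < e \<longrightarrow> a < snd (\<rho> t) \<and> snd (\<rho> t) < b"
  shows "\<exists>\<sigma> e1. e \<le> e1 \<and> \<sigma> 0 = (fst (\<rho> 0), fm (snd (\<rho> 0))) \<and> \<sigma> e1 = (fst (\<rho> e), fm (snd (\<rho> e)))
     \<and> runL A V F \<sigma> e1"
proof -
  consider "snd (\<rho> 0) \<le> a" "snd (\<rho> e) \<le> a" | "b \<le> snd (\<rho> 0)" "b \<le> snd (\<rho> e)"
    | "snd (\<rho> 0) \<le> a" "b \<le> snd (\<rho> e)" | "b \<le> snd (\<rho> 0)" "snd (\<rho> e) \<le> a"
    using c0 ce by blast
  then show ?thesis
  proof cases
    case 1
    have "\<forall>t<e. TRok (snd (\<rho> t)) 0"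
    proof (intro allI impI)
      fix t assume "t < e" then show "TRok (snd (\<rho> t)) 0"
        using 1 inter unfolding TRok_def by (cases "t = 0") auto
    qed
    then have "runL A V F (sh \<rho> 0) e" using CONSTrun[OF r] by blast
    moreover have "sh \<rho> 0 0 = (fst (\<rho> 0), fm (snd (\<rho> 0)))" "sh \<rho> 0 e = (fst (\<rho> e), fm (snd (\<rho> e)))"
      using 1 big unfolding sh_def fm_def by auto
    ultimately show ?thesis by blast
  next
    case 2
    have "\<forall>t<e. TRok (snd (\<rho> t)) (int D)"
    proof (intro allI impI)
      fix t assume "t < e" then show "TRok (snd (\<rho> t)) (int D)"
        using 2 inter unfolding TRok_def by (cases "t = 0") auto
    qed
    then have "runL A V F (sh \<rho> (int D)) e" using CONSTrun[OF r] by blast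
    moreover have "sh \<rho> (int D) 0 = (fst (\<rho> 0), fm (snd (\<rho> 0)))" "sh \<rho> (int D) e = (fst (\<rho> e), fm (snd (\<rho> e)))"
      using 2 big unfolding sh_def fm_def by auto
    ultimately show ?thesis by blast
  next
    case 3 then show ?thesis using seg_up[OF r _ _ inter] by blast
  next
    case 4 then show ?thesis using seg_down[OF r _ _ inter] by blast
  qed
qed

lemma key:
  "\<forall>\<rho>. runL A V' F \<rho> L \<longrightarrow> (snd (\<rho> 0) \<le> a \<or> b \<le> snd (\<rho> 0)) \<longrightarrow>
     (\<exists>\<sigma> L'. L \<le> L' \<and> \<sigma> 0 = (fst (\<rho> 0), fm (snd (\<rho> 0))) \<and> runL A V F \<sigma> L')"
proof (induction L rule: less_induct)
  case (less L)
  show ?case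
  proof (intro allI impI)
    fix \<rho> assume r: "runL A V' F \<rho> L" and side: "snd (\<rho> 0) \<le> a \<or> b \<le> snd (\<rho> 0)"
    show "\<exists>\<sigma> L'. L \<le> L' \<and> \<sigma> 0 = (fst (\<rho> 0), fm (snd (\<rho> 0))) \<and> runL A V F \<sigma> L'"
    proof (cases "\<exists>t. 0 < t \<and> t \<le> L \<and> \<not> (a < snd (\<rho> t) \<and> snd (\<rho> t) < b)")
      case True
      define e where "e = (LEAST t. 0 < t \<and> t \<le> L \<and> \<not> (a < snd (\<rho> t) \<and> snd (\<rho> t) < b))"
      have e: "0 < e \<and> e \<le> L \<and> \<not> (a < snd (\<rho> e) \<and> snd (\<rho> e) < b)"
        unfolding e_def using True by (metis (mono_tags, lifting) LeastI)
      have inter: "\<forall>t. 0 < t \<and> t < e \<longrightarrow> a < snd (\<rho> t) \<and> snd (\<rho> t) < b"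
      proof (intro allI impI)
        fix t assume t: "0 < t \<and> t < e"
        then have "\<not> (0 < t \<and> t \<le> L \<and> \<not> (a < snd (\<rho> t) \<and> snd (\<rho> t) < b))"
          using t unfolding e_def by (intro not_less_Least) simp
        then show "a < snd (\<rho> t) \<and> snd (\<rho> t) < b" using t e by auto
      qed
      have ce: "snd (\<rho> e) \<le> a \<or> b \<le> snd (\<rho> e)" using e by auto
      obtain \<sigma>1 e1 where s1: "e \<le> e1" "\<sigma>1 0 = (fst (\<rho> 0), fm (snd (\<rho> 0)))"
        "\<sigma>1 e1 = (fst (\<rho> e), fm (snd (\<rho> e)))" "runL A V F \<sigma>1 e1"
        using seg[OF runL_prefix[OF r] _ side ce inter] e by blast
      have r2: "runL A V' F (\<lambda>t. \<rho> (t + e)) (L - e)" using runL_suffix[OF r] e by blast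
      have "L - e < L" using e by auto
      then obtain \<sigma>2 L2 where s2: "L - e \<le> L2" "\<sigma>2 0 = (fst (\<rho> e), fm (snd (\<rho> e)))" "runL A V F \<sigma>2 L2"
        using less.IH[of "L - e"] r2 ce by fastforce
      have "runL A V F (\<lambda>t. if t \<le> e1 then \<sigma>1 t else \<sigma>2 (t - e1)) (e1 + L2)"
        using runL_concat[OF s1(4) s2(3)] s1(3) s2(2) by simp
      moreover have "L \<le> e1 + L2" using s1(1) s2(1) by simp
      ultimately show ?thesis using s1(2) by (intro exI[of _ "\<lambda>t. if t \<le> e1 then \<sigma>1 t else \<sigma>2 (t - e1)"] exI[of _ "e1 + L2"]) auto
    next
      case False
      define z where "z = (if b \<le> snd (\<rho> 0) then int D else 0)"
      have "\<forall>t<L. TRok (snd (\<rho> t)) z"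
      proof (intro allI impI)
        fix t assume t: "t < L"
        show "TRok (snd (\<rho> t)) z"
        proof (cases "t = 0")
          case True then show ?thesis using side big unfolding TRok_def z_def by auto
        next
          case f: False
          then have "a < snd (\<rho> t) \<and> snd (\<rho> t) < b" using False t
            by (meson less_imp_le not_gr_zero)
          then show ?thesis unfolding TRok_def z_def by auto
        qed
      qed
      then have "runL A V F (sh \<rho> z) L" using CONSTrun[OF r] by blast
      moreover have "sh \<rho> z 0 = (fst (\<rho> 0), fm (snd (\<rho> 0)))"
        using side big unfolding sh_def fm_def z_def by auto
      ultimately show ?thesis by blast
    qed
  qed
qed

lemma key0:
  assumes "runL A V' F \<rho> L" "\<rho> 0 = (q0, 0)"
  shows "\<exists>\<sigma>. \<sigma> 0 = (q0, 0) \<and> runL A V F \<sigma> L"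
proof -
  obtain \<sigma> L' where \<sigma>: "L \<le> L'" "\<sigma> 0 = (fst (\<rho> 0), fm (snd (\<rho> 0)))" "runL A V F \<sigma> L'"
    using key[of L] assms by auto
  have "fm 0 = 0" using big by (simp add: fm_def)
  then have "\<sigma> 0 = (q0, 0)" using \<sigma>(2) assms(2) by simp
  then show ?thesis using \<sigma> runL_prefix by blast
qed

end


lemma konig:
  assumes wf: "ocapt_wf A" and fin: "\<forall>L. \<exists>\<rho>. \<rho> 0 = cf0 \<and> runL A V F \<rho> L"
  shows "\<exists>\<rho>. inf_run A V cf0 \<rho> \<and> \<not> reaches F \<rho>"
proof -
  define G where "G = {cf. \<forall>L. \<exists>\<rho>. \<rho> 0 = cf \<and> runL A V F \<rho> L}"
  have succ: "\<exists>cf'. step A V cf cf' \<and> cf' \<in> G" if cfG: "cf \<in> G" for cf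
  proof (rule ccontr)
    assume no: "\<not> (\<exists>cf'. step A V cf cf' \<and> cf' \<in> G)"
    define S where "S = {cf'. step A V cf cf'}"
    have "S \<subseteq> St A \<times> {0..snd cf + 1}"
    proof
      fix cf' assume "cf' \<in> S"
      then have st: "step A V cf cf'" by (simp add: S_def)
      from stepD'[OF wf st] have "(fst cf, fst cf') \<in> Tr A" "snd cf' \<le> snd cf + 1" by auto
      then show "cf' \<in> St A \<times> {0..snd cf + 1}" using wf unfolding ocapt_wf_def
        by (cases cf') auto
    qed
    moreover have "finite (St A)" using wf by (simp add: ocapt_wf_def)
    ultimately have finS: "finite S" by (meson finite_SigmaI finite_atLeastAtMost finite_subset)
    have "\<forall>s\<in>S. \<exists>L. \<not> (\<exists>\<rho>. \<rho> 0 = s \<and> runL A V F \<rho> L)" using no unfolding S_def G_def by auto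
    then obtain f where f: "\<forall>s\<in>S. \<not> (\<exists>\<rho>. \<rho> 0 = s \<and> runL A V F \<rho> (f s))" by metis
    define N where "N = (\<Sum>s\<in>S. f s)"
    obtain \<rho> where \<rho>: "\<rho> 0 = cf" "runL A V F \<rho> (Suc N)" using cfG unfolding G_def by blast
    have s: "\<rho> 1 \<in> S" using \<rho> unfolding runL_def S_def by auto
    have "runL A V F (\<lambda>t. \<rho> (t + 1)) (Suc N - 1)" using runL_suffix[OF \<rho>(2), of 1] by simp
    then have r2: "runL A V F (\<lambda>t. \<rho> (t + 1)) N" by simp
    have "f (\<rho> 1) \<le> N" unfolding N_def using finS s by (simp add: member_le_sum)
    then have "runL A V F (\<lambda>t. \<rho> (t + 1)) (f (\<rho> 1))" using runL_prefix[OF r2] by blast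
    then show False using f s by fastforce
  qed
  define nx where "nx cf = (SOME cf'. step A V cf cf' \<and> cf' \<in> G)" for cf
  define \<rho> where "\<rho> t = (nx ^^ t) cf0" for t
  have inG: "\<rho> t \<in> G" for t
  proof (induction t)
    case 0 then show ?case using fin by (simp add: \<rho>_def G_def)
  next
    case (Suc t)
    have "step A V (\<rho> t) (nx (\<rho> t)) \<and> nx (\<rho> t) \<in> G"
      unfolding nx_def by (rule someI_ex) (rule succ[OF Suc])
    then show ?case by (simp add: \<rho>_def)
  qed
  have stp: "step A V (\<rho> t) (\<rho> (Suc t))" for t
  proof -
    have "step A V (\<rho> t) (nx (\<rho> t)) \<and> nx (\<rho> t) \<in> G"
      unfolding nx_def by (rule someI_ex) (rule succ[OF inG])
    then show ?thesis by (simp add: \<rho>_def)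
  qed
  have nF: "fst (\<rho> t) \<notin> F" for t
  proof -
    obtain \<sigma> where "\<sigma> 0 = \<rho> t" "runL A V F \<sigma> 0" using inG[of t] unfolding G_def by blast
    then show ?thesis unfolding runL_def by auto
  qed
  have "inf_run A V cf0 \<rho>" unfolding inf_run_def using stp by (simp add: \<rho>_def)
  moreover have "\<not> reaches F \<rho>" unfolding reaches_def using nF by auto
  ultimately show ?thesis by blast
qed

lemma inf_fin:
  assumes "inf_run A V cf0 \<rho>" "\<not> reaches F \<rho>"
  shows "\<forall>L. \<exists>\<rho>. \<rho> 0 = cf0 \<and> runL A V F \<rho> L"
  using assms unfolding inf_run_def reaches_def runL_def by blast

lemma gaps:
  fixes M :: "nat set"
  assumes fin: "finite M" and z: "0 \<in> M"
    and small: "\<forall>a\<in>M. \<forall>b\<in>M. a < b \<and> (\<forall>y\<in>M. y \<le> a \<or> b \<le> y) \<longrightarrow> b - a \<le> K"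
  shows "m \<in> M \<Longrightarrow> m \<le> K * card {y\<in>M. y < m}"
proof (induction m rule: less_induct)
  case (less m)
  show ?case
  proof (cases "m = 0")
    case True then show ?thesis by simp
  next
    case False
    define B where "B = {y\<in>M. y < m}"
    have finB: "finite B" using fin by (simp add: B_def)
    have neB: "B \<noteq> {}" using z False by (auto simp: B_def)
    define m' where "m' = Max B"
    have m'B: "m' \<in> B" using finB neB by (simp add: m'_def)
    then have m'M: "m' \<in> M" "m' < m" by (auto simp: B_def)
    have nobetween: "\<forall>y\<in>M. y \<le> m' \<or> m \<le> y"
    proof
      fix y assume y: "y \<in> M"
      show "y \<le> m' \<or> m \<le> y"
      proof (cases "y < m")
        case True then have "y \<in> B" using y by (simp add: B_def)
        then show ?thesis using finB by (simp add: m'_def)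
      qed simp
    qed
    have gap: "m - m' \<le> K" using small m'M less.prems nobetween by blast
    have IH: "m' \<le> K * card {y\<in>M. y < m'}" using less.IH m'M by blast
    have sub: "{y\<in>M. y < m'} \<subset> B" using m'B m'M by (auto simp: B_def)
    then have "card {y\<in>M. y < m'} < card B" using finB by (simp add: psubset_card_mono)
    then have "card {y\<in>M. y < m'} + 1 \<le> card B" by simp
    then have "K * (card {y\<in>M. y < m'} + 1) \<le> K * card B" by (rule mult_le_mono2)
    then show ?thesis using IH gap unfolding B_def by (simp add: algebra_simps)
  qed
qed


definition noinf :: "ocapt \<Rightarrow> (nat \<Rightarrow> nat) \<Rightarrow> nat \<Rightarrow> nat set \<Rightarrow> bool" where
  "noinf A V q0 F \<longleftrightarrow> \<not> (\<forall>L. \<exists>\<rho>. \<rho> 0 = (q0, 0) \<and> runL A V F \<rho> L)"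

lemma reduce:
  assumes wf: "ocapt_wf A"
  shows "noinf A V q0 F \<Longrightarrow> \<exists>V'. (\<forall>x\<in>Par A. V' x \<le> (fact (card (St A)) + card (St A) + 2) * (card (Par A) + 1))
            \<and> noinf A V' q0 F"
proof (induction "\<Sum>x\<in>Par A. V x" arbitrary: V rule: less_induct)
  case less
  define n where "n = card (St A)"
  define D :: nat where "D = fact n"
  define K where "K = D + n + 2"
  define M where "M = insert 0 (V ` Par A)"
  have finP: "finite (Par A)" using wf by (simp add: ocapt_wf_def)
  have finM: "finite M" using finP by (simp add: M_def)
  show ?case
  proof (cases "\<forall>a\<in>M. \<forall>b\<in>M. a < b \<and> (\<forall>y\<in>M. y \<le> a \<or> b \<le> y) \<longrightarrow> b - a \<le> K")
    case True
    have "\<forall>x\<in>Par A. V x \<le> K * (card (Par A) + 1)"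
    proof
      fix x assume x: "x \<in> Par A"
      then have "V x \<in> M" by (simp add: M_def)
      then have "V x \<le> K * card {y\<in>M. y < V x}" using gaps[OF finM _ True] by (simp add: M_def)
      moreover have "card {y\<in>M. y < V x} \<le> card M" using finM by (simp add: card_mono)
      moreover have "card M \<le> card (Par A) + 1"
      proof -
        have "card M \<le> Suc (card (V ` Par A))" unfolding M_def by (simp add: card_insert_if finP)
        moreover have "card (V ` Par A) \<le> card (Par A)" by (rule card_image_le[OF finP])
        ultimately show ?thesis by simp
      qed
      ultimately have "card {y\<in>M. y < V x} \<le> card (Par A) + 1" "V x \<le> K * card {y\<in>M. y < V x}"
        by linarith+
      then show "V x \<le> K * (card (Par A) + 1)"
        using mult_le_mono2 le_trans by blast
    qed
    then show ?thesis using less.prems unfolding K_def D_def n_def by blast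
  next
    case False
    then have "\<exists>a\<in>M. \<exists>b\<in>M. a < b \<and> (\<forall>y\<in>M. y \<le> a \<or> b \<le> y) \<and> K < b - a"
      by (meson not_le)
    then obtain a b where ab: "a \<in> M" "b \<in> M" "a < b" "\<forall>y\<in>M. y \<le> a \<or> b \<le> y" "K < b - a" by blast
    have "b \<in> V ` Par A" using ab unfolding M_def by auto
    then obtain x0 where x0: "x0 \<in> Par A" "V x0 = b" by blast
    define b' where "b' = b - D"
    define V'' where "V'' x = (if b \<le> V x then V x - D else V x)" for x
    have g: "gap A V'' V a b' D"
    proof
      show "ocapt_wf A" by (rule wf)
      show "a + card (St A) + 2 \<le> b'" using ab unfolding b'_def K_def n_def by simp
      show "\<forall>x\<in>Par A. V'' x \<le> a \<or> b' \<le> V'' x" using ab(4) unfolding M_def V''_def b'_def by auto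
      show "\<forall>x\<in>Par A. V x = (if b' \<le> V'' x then V'' x + D else V'' x)"
        using ab unfolding M_def V''_def b'_def K_def by auto
      show "\<forall>d. 1 \<le> d \<and> d \<le> card (St A) \<longrightarrow> d dvd D" unfolding D_def n_def by (simp add: dvd_fact)
    qed
    have "noinf A V'' q0 F"
      unfolding noinf_def
    proof
      assume fin'': "\<forall>L. \<exists>\<rho>. \<rho> 0 = (q0, 0) \<and> runL A V'' F \<rho> L"
      have "\<forall>L. \<exists>\<rho>. \<rho> 0 = (q0, 0) \<and> runL A V F \<rho> L"
      proof
        fix L
        obtain \<rho> where \<rho>: "\<rho> 0 = (q0, 0)" "runL A V'' F \<rho> L" using fin'' by blast
        show "\<exists>\<rho>. \<rho> 0 = (q0, 0) \<and> runL A V F \<rho> L" using gap.key0[OF g \<rho>(2,1)] .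
      qed
      then show False using less.prems unfolding noinf_def by blast
    qed
    moreover have "(\<Sum>x\<in>Par A. V'' x) < (\<Sum>x\<in>Par A. V x)"
    proof (rule sum_strict_mono_ex1[OF finP])
      show "\<forall>x\<in>Par A. V'' x \<le> V x" unfolding V''_def by auto
      have "0 < D" unfolding D_def by simp
      then show "\<exists>x\<in>Par A. V'' x < V x" using x0 ab unfolding V''_def by (intro bexI[OF _ x0(1)]) auto
    qed
    ultimately show ?thesis using less.hyps by blast
  qed
qed

lemma bound_arith:
  fixes n p s :: nat
  assumes "1 \<le> n" "n \<le> s" "p \<le> s"
  shows "(fact n + n + 2) * (p + 1) \<le> (2::nat) ^ ((s + 1) ^ 3)"
proof -
  have s1: "1 \<le> s" using assms by simp
  have "fact n \<le> n ^ n" using fact_le_power[of n, where 'a=nat] by simp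
  also have "\<dots> \<le> s ^ n" using assms by (simp add: power_mono)
  also have "\<dots> \<le> s ^ s" using assms s1 by (simp add: power_increasing)
  also have "\<dots> \<le> (2 ^ s) ^ s" using less_exp[of s] by (simp add: power_mono less_imp_le)
  also have "\<dots> = 2 ^ (s * s)" by (simp add: power_mult)
  also have "\<dots> \<le> 2 ^ (s * s + s)" by (simp add: power_increasing)
  finally have f: "fact n \<le> (2::nat) ^ (s * s + s)" .
  have "n + 2 \<le> s + 2" using assms by simp
  also have "\<dots> \<le> 2 ^ (s + 1)"
  proof -
    have "s + 1 < 2 ^ (s + 1)" by (rule less_exp)
    then show ?thesis by linarith
  qed
  also have "\<dots> \<le> 2 ^ (s * s + s)" using s1 by (intro power_increasing) (auto simp: le_square)
  finally have g: "n + 2 \<le> (2::nat) ^ (s * s + s)" .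
  have h: "p + 1 \<le> (2::nat) ^ s"
  proof -
    have "s < 2 ^ s" by (rule less_exp)
    then show ?thesis using assms by linarith
  qed
  have "(fact n + n + 2) * (p + 1) \<le> (2 ^ (s * s + s) + 2 ^ (s * s + s)) * 2 ^ s"
    using f g h by (intro mult_le_mono) auto
  also have "\<dots> = 2 ^ (s * s + 2 * s + 1)"
  proof -
    have "(2 ^ (s * s + s) + 2 ^ (s * s + s)) * 2 ^ s = (2::nat) * (2 ^ (s * s + s) * 2 ^ s)" by simp
    also have "\<dots> = 2 ^ (s * s + 2 * s + 1)"
      by (simp only: power_add[symmetric] power_Suc[symmetric]) (simp add: algebra_simps)
    finally show ?thesis .
  qed
  also have "\<dots> \<le> 2 ^ ((s + 1) ^ 3)"
    by (intro power_increasing) (auto simp: power3_eq_cube algebra_simps)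
  finally show ?thesis .
qed

lemma air_noinf:
  assumes "ocapt_wf A"
  shows "all_inf_runs_reach A V q0 F \<longleftrightarrow> noinf A V q0 F"
  unfolding all_inf_runs_reach_def noinf_def
  using konig[OF assms] inf_fin by blast

theorem lemma22:
  "\<exists>c::nat. \<forall>(A::ocapt) (q0::nat) (F::nat set).
     ocapt_wf A \<longrightarrow> q0 \<in> St A \<longrightarrow> F \<subseteq> St A \<longrightarrow>
     (\<exists>V. all_inf_runs_reach A V q0 F) \<longrightarrow>
     (\<exists>V'. (\<forall>x\<in>Par A. V' x \<le> 2 ^ ((ocapt_size A + 1) ^ c))
           \<and> all_inf_runs_reach A V' q0 F)"
proof (intro exI[of _ 3] allI impI)
  fix A q0 F
  assume wf: "ocapt_wf A" and q0: "q0 \<in> St A" and "F \<subseteq> St A"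
    and "\<exists>V. all_inf_runs_reach A V q0 F"
  then obtain V where "noinf A V q0 F" using air_noinf[OF wf] by blast
  then obtain V' where V': "\<forall>x\<in>Par A. V' x \<le> (fact (card (St A)) + card (St A) + 2) * (card (Par A) + 1)"
    "noinf A V' q0 F" using reduce[OF wf] by blast
  have finS: "finite (St A)" using wf by (simp add: ocapt_wf_def)
  have "1 \<le> card (St A)" using q0 finS by (metis One_nat_def Suc_leI card_gt_0_iff empty_iff)
  then have "(fact (card (St A)) + card (St A) + 2) * (card (Par A) + 1) \<le> 2 ^ ((ocapt_size A + 1) ^ 3)"
    by (intro bound_arith) (auto simp: ocapt_size_def)
  then show "\<exists>V'. (\<forall>x\<in>Par A. V' x \<le> 2 ^ ((ocapt_size A + 1) ^ 3)) \<and> all_inf_runs_reach A V' q0 F"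
    using V' air_noinf[OF wf] by (meson le_trans)
qed

end
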